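(* Let $G=(V,E)$ be a graph and let $\boldsymbol{\pi}=(\pi_1,\dots,\pi_n)$ be a collection of paths, where $\pi_k=(v_k(0),v_k(1),\dots,v_k(\ell_k))$ for each $k$. Suppose $\boldsymbol{\pi}$ is disentangled. Then for every agent index $i$ and every timestep $t\ge \ell_i$, there exists at least one extension of $\pi_i$ up to timestep $t$, i.e. nodes $v_i(\ell_i+1),\dots,v_i(t)$ (each $v_i(s+1)$ equal to $v_i(s)$ or adjacent to it), such that the collection obtained by replacing $\pi_i$ with $(v_i(0),\dots,v_i(\ell_i),v_i(\ell_i+1),\dots,v_i(t))$ is still disentangled.
   Context: A path of agent $a_k$ is a sequence of nodes $\pi_k=(v_k(0),\dots,v_k(\ell_k))$, where $v_k(s)$ is the node occupied at discrete timestep $s$ and $\ell_k=|\pi_k|-1$; consecutive nodes are equal (staying) or adjacent in $G$; paths may only be extended by appending nodes at the end. Two paths $\pi_i,\pi_j$ with $\ell_i\le \ell_j$ are called disentangled if (1) $v_i(t)\ne v_j(t)$ for all $0\le t\le \ell_i$; (2) $v_i(t)\ne v_j(t-1)$ and $v_i(t-1)\ne v_j(t)$ for all $0<t\le \ell_i$; and (3) $v_i(\ell_i)\ne v_j(t)$ for all $\ell_i+1\le t\le \ell_j$. A collection $\boldsymbol{\pi}$ of paths is disentangled if every pair of its paths is disentangled. *)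

theory Defs
  imports Main
begin

definition graph :: "'a set \<Rightarrow> 'a set set \<Rightarrow> bool" where
  "graph V E \<longleftrightarrow> (\<forall>e\<in>E. \<exists>u v. e = {u, v} \<and> u \<in> V \<and> v \<in> V \<and> u \<noteq> v)"

definition adjacent :: "'a set set \<Rightarrow> 'a \<Rightarrow> 'a \<Rightarrow> bool" where
  "adjacent E u v \<longleftrightarrow> {u, v} \<in> E"

definition is_path :: "'a set \<Rightarrow> 'a set set \<Rightarrow> 'a list \<Rightarrow> bool" where
  "is_path V E p \<longleftrightarrow> p \<noteq> [] \<and> set p \<subseteq> V \<and>
     (\<forall>s. s + 1 < length p \<longrightarrow> p ! (s + 1) = p ! s \<or> adjacent E (p ! s) (p ! (s + 1)))"

abbreviation last_time :: "'a list \<Rightarrow> nat" where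
  "last_time p \<equiv> length p - 1"

text \<open>Disentangledness of p, q under the assumption l_p \<le> l_q (conditions (1)-(3)).\<close>
definition disentangled_ord :: "'a list \<Rightarrow> 'a list \<Rightarrow> bool" where
  "disentangled_ord p q \<longleftrightarrow>
     (\<forall>t. t \<le> last_time p \<longrightarrow> p ! t \<noteq> q ! t) \<and>
     (\<forall>t. 0 < t \<and> t \<le> last_time p \<longrightarrow> p ! t \<noteq> q ! (t - 1) \<and> p ! (t - 1) \<noteq> q ! t) \<and>
     (\<forall>t. last_time p + 1 \<le> t \<and> t \<le> last_time q \<longrightarrow> p ! last_time p \<noteq> q ! t)"

definition disentangled_pair :: "'a list \<Rightarrow> 'a list \<Rightarrow> bool" where
  "disentangled_pair p q \<longleftrightarrow>
     (if last_time p \<le> last_time q then disentangled_ord p q else disentangled_ord q p)"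

definition disentangled :: "nat \<Rightarrow> (nat \<Rightarrow> 'a list) \<Rightarrow> bool" where
  "disentangled n pi \<longleftrightarrow> (\<forall>i<n. \<forall>j<n. i \<noteq> j \<longrightarrow> disentangled_pair (pi i) (pi j))"

end

theory Submission
  imports Defs
begin

lemma ord_sym: assumes "length p = length q" shows "disentangled_ord p q = disentangled_ord q p"
proof -
  have *: "disentangled_ord p q \<Longrightarrow> disentangled_ord q p" if "length p = length q" for p q :: "'b list"
    using that unfolding disentangled_ord_def
    apply (intro conjI allI impI)
       apply (metis)
      apply (metis)
     apply (metis)
    apply linarith
    done
  show ?thesis using *[of p q] *[of q p] assms by auto
qed

lemma pair_sym: assumes "p \<noteq> []" "q \<noteq> []" shows "disentangled_pair p q = disentangled_pair q p"
proof (cases "last_time p = last_time q")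
  case True
  then have "length p = length q" using assms by (cases p; cases q) auto
  then show ?thesis using True ord_sym[of p q] unfolding disentangled_pair_def by simp
next
  case False
  then show ?thesis unfolding disentangled_pair_def by auto
qed

lemma ext_nth:
  assumes "p \<noteq> []" "s < length p + k"
  shows "(p @ replicate k (last p)) ! s = p ! (min s (length p - 1))"
proof (cases "s < length p")
  case True
  then show ?thesis using assms by (auto simp: nth_append min_def)
next
  case False
  then have "min s (length p - 1) = length p - 1" by simp
  then show ?thesis using False assms by (auto simp: nth_append last_conv_nth)
qed

lemma ext_pair:
  assumes "p \<noteq> []" "q \<noteq> []" "disentangled_pair p q"
  shows "disentangled_pair (p @ replicate k (last p)) q"
proof -
  define p' where "p' = p @ replicate k (last p)"
  define l where "l = length p - 1"
  define m where "m = length q - 1"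
  have lp': "last_time p' = l + k" using assms(1) by (cases p) (simp_all add: p'_def l_def)
  have nth: "\<And>s. s \<le> l + k \<Longrightarrow> p' ! s = p ! (min s l)"
  proof -
    fix s assume "s \<le> l + k"
    moreover have "length p = l + 1" using assms(1) unfolding l_def by (cases p) auto
    ultimately have "s < length p + k" by simp
    then show "p' ! s = p ! (min s l)" unfolding p'_def l_def using ext_nth[OF assms(1)] by blast
  qed
  have nA: "\<And>s. s \<le> l \<Longrightarrow> p' ! s = p ! s" using nth by (simp add: min_def)
  have nB: "\<And>s. l \<le> s \<Longrightarrow> s \<le> l + k \<Longrightarrow> p' ! s = p ! l" using nth by (simp add: min_def)
  show ?thesis
  proof (cases "l \<le> m")
    case True
    then have o: "disentangled_ord p q" using assms(3) unfolding disentangled_pair_def l_def m_def by simp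
    from o have o1: "\<And>s. s \<le> l \<Longrightarrow> p ! s \<noteq> q ! s"
      and o2: "\<And>s. 0 < s \<Longrightarrow> s \<le> l \<Longrightarrow> p ! s \<noteq> q ! (s - 1) \<and> p ! (s - 1) \<noteq> q ! s"
      and o3: "\<And>s. l + 1 \<le> s \<Longrightarrow> s \<le> m \<Longrightarrow> p ! l \<noteq> q ! s"
      unfolding disentangled_ord_def l_def m_def by auto
    show ?thesis
    proof (cases "l + k \<le> m")
      case True
      have "disentangled_ord p' q"
        unfolding disentangled_ord_def lp' m_def[symmetric]
      proof (intro conjI allI impI)
        fix s assume a: "s \<le> l + k" show "p' ! s \<noteq> q ! s"
        proof (cases "s \<le> l")
          case True then show ?thesis using nA o1 by simp
        next
          case False then show ?thesis using nB[of s] o3[of s] a \<open>l + k \<le> m\<close> by simp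
        qed
      next
        fix s assume a: "0 < s \<and> s \<le> l + k"
        have "p' ! s \<noteq> q ! (s - 1) \<and> p' ! (s - 1) \<noteq> q ! s"
        proof (cases "s \<le> l")
          case True then show ?thesis using nA[of s] nA[of "s-1"] o2[of s] a by simp
        next
          case False
          have e1: "p' ! s = p ! l" "p' ! (s-1) = p ! l" using nB[of s] nB[of "s-1"] a False by auto
          have "p ! l \<noteq> q ! (s - 1)"
          proof (cases "s = l + 1")
            case True then show ?thesis using o1[of l] by simp
          next
            case False then show ?thesis using o3[of "s-1"] a \<open>\<not> s \<le> l\<close> \<open>l + k \<le> m\<close> by simp
          qed
          moreover have "p ! l \<noteq> q ! s" using o3[of s] a False \<open>l + k \<le> m\<close> by simp
          ultimately show ?thesis using e1 by simp
        qed
        then show "p' ! s \<noteq> q ! (s - 1)" and "p' ! (s - 1) \<noteq> q ! s" by simp_all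
      next
        fix s assume "l + k + 1 \<le> s \<and> s \<le> m"
        thus "p' ! (l + k) \<noteq> q ! s" using nB[of "l+k"] o3[of s] by simp
      qed
      moreover have c: "last_time p' \<le> last_time q" using lp' True m_def by simp
      ultimately show ?thesis unfolding disentangled_pair_def p'_def[symmetric] by simp
    next
      case False
      have "disentangled_ord q p'"
        unfolding disentangled_ord_def lp' m_def[symmetric]
      proof (intro conjI allI impI)
        fix s assume a: "s \<le> m" show "q ! s \<noteq> p' ! s"
        proof (cases "s \<le> l")
          case True then show ?thesis using nA o1 by (metis)
        next
          case False then show ?thesis using nB[of s] o3[of s] a \<open>\<not> l + k \<le> m\<close> by simp
        qed
      next
        fix s assume a: "0 < s \<and> s \<le> m"
        have "q ! s \<noteq> p' ! (s - 1) \<and> q ! (s - 1) \<noteq> p' ! s"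
        proof (cases "s \<le> l")
          case True then show ?thesis using nA[of s] nA[of "s-1"] o2[of s] a by auto
        next
          case False
          have e1: "p' ! s = p ! l" "p' ! (s-1) = p ! l" using nB[of s] nB[of "s-1"] a False \<open>\<not> l + k \<le> m\<close> by auto
          have "p ! l \<noteq> q ! (s - 1)"
          proof (cases "s = l + 1")
            case True then show ?thesis using o1[of l] by simp
          next
            case False then show ?thesis using o3[of "s-1"] a \<open>\<not> s \<le> l\<close> by simp
          qed
          moreover have "p ! l \<noteq> q ! s" using o3[of s] a False by simp
          ultimately show ?thesis using e1 by auto
        qed
        then show "q ! s \<noteq> p' ! (s - 1)" and "q ! (s - 1) \<noteq> p' ! s" by simp_all
      next
        fix s assume a: "m + 1 \<le> s \<and> s \<le> l + k"
        have "q ! m \<noteq> p ! l"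
        proof (cases "l = m")
          case True then show ?thesis using o1[of l] by auto
        next
          case False then show ?thesis using o3[of m] \<open>l \<le> m\<close> by auto
        qed
        then show "q ! m \<noteq> p' ! s" using nB[of s] a \<open>l \<le> m\<close> by simp
      qed
      moreover have c: "\<not> last_time p' \<le> last_time q" using lp' False m_def by simp
      ultimately show ?thesis unfolding disentangled_pair_def p'_def[symmetric] by simp
    qed
  next
    case False
    then have o: "disentangled_ord q p" using assms(3) unfolding disentangled_pair_def l_def m_def by simp
    from o have o1: "\<And>s. s \<le> m \<Longrightarrow> q ! s \<noteq> p ! s"
      and o2: "\<And>s. 0 < s \<Longrightarrow> s \<le> m \<Longrightarrow> q ! s \<noteq> p ! (s - 1) \<and> q ! (s - 1) \<noteq> p ! s"
      and o3: "\<And>s. m + 1 \<le> s \<Longrightarrow> s \<le> l \<Longrightarrow> q ! m \<noteq> p ! s"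
      unfolding disentangled_ord_def l_def m_def by auto
    have "disentangled_ord q p'"
      unfolding disentangled_ord_def lp' m_def[symmetric]
    proof (intro conjI allI impI)
      fix s assume "s \<le> m" thus "q ! s \<noteq> p' ! s" using nA[of s] o1[of s] False by simp
    next
      fix s assume a: "0 < s \<and> s \<le> m"
      have "q ! s \<noteq> p' ! (s - 1) \<and> q ! (s - 1) \<noteq> p' ! s"
        using nA[of s] nA[of "s-1"] diff_le_self[of s 1] a o2[of s] False by (metis le_trans nat_le_linear)
      then show "q ! s \<noteq> p' ! (s - 1)" and "q ! (s - 1) \<noteq> p' ! s" by simp_all
    next
      fix s assume a: "m + 1 \<le> s \<and> s \<le> l + k"
      show "q ! m \<noteq> p' ! s"
      proof (cases "s \<le> l")
        case True then show ?thesis using nA[of s] o3[of s] a by simp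
      next
        case False then show ?thesis using nB[of s] o3[of l] a \<open>\<not> l \<le> m\<close> by simp
      qed
    qed
    moreover have c: "\<not> last_time p' \<le> last_time q" using lp' False m_def by simp
    ultimately show ?thesis unfolding disentangled_pair_def p'_def[symmetric] by simp
  qed
qed

theorem proposition3p6:
  fixes V :: "'a set" and E :: "'a set set" and n :: nat and pi :: "nat \<Rightarrow> 'a list"
  assumes "graph V E"
    and "\<forall>k<n. is_path V E (pi k)"
    and "disentangled n pi"
    and "i < n"
    and "t \<ge> last_time (pi i)"
  shows "\<exists>p'. is_path V E p' \<and> length p' = t + 1 \<and> take (length (pi i)) p' = pi i \<and>
               disentangled n (pi(i := p'))"
proof -
  define p where "p = pi i"
  define k where "k = t - last_time p"
  define p' where "p' = p @ replicate k (last p)"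
  have pp: "is_path V E p" using assms(2,4) p_def by simp
  then have ne: "p \<noteq> []" and sp: "set p \<subseteq> V" unfolding is_path_def by auto
  have len: "length p' = t + 1" using ne assms(5) unfolding p'_def k_def p_def[symmetric]
    by (cases p) auto
  have tk: "take (length p) p' = p" unfolding p'_def by simp
  have path: "is_path V E p'"
    unfolding is_path_def
  proof (intro conjI allI impI)
    show "p' \<noteq> []" using ne p'_def by simp
    show "set p' \<subseteq> V" using sp ne unfolding p'_def by (auto dest: last_in_set)
  next
    fix s assume s: "s + 1 < length p'"
    show "p' ! (s + 1) = p' ! s \<or> adjacent E (p' ! s) (p' ! (s + 1))"
    proof (cases "s + 1 < length p")
      case True
      then show ?thesis using pp unfolding is_path_def p'_def by (simp add: nth_append)
    next
      case False
      have "p' ! (s+1) = p ! (length p - 1)" "p' ! s = p ! (length p - 1)"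
      proof -
        have m: "min (s+1) (length p - 1) = length p - 1" "min s (length p - 1) = length p - 1"
          using False by auto
        have "s + 1 < length p + k" "s < length p + k" using s len unfolding p'_def by auto
        then show "p' ! (s+1) = p ! (length p - 1)" "p' ! s = p ! (length p - 1)"
          using ext_nth[OF ne, of "s+1" k] ext_nth[OF ne, of s k] m unfolding p'_def by simp_all
      qed
      then show ?thesis by simp
    qed
  qed
  have "disentangled n (pi(i := p'))"
    unfolding disentangled_def
  proof (intro allI impI)
    fix a b assume ab: "a < n" "b < n" "a \<noteq> b"
    have nea: "pi a \<noteq> []" if "a < n" for a using assms(2) that unfolding is_path_def by simp
    have d: "disentangled_pair (pi a) (pi b)" using assms(3) ab unfolding disentangled_def by simp
    show "disentangled_pair ((pi(i := p')) a) ((pi(i := p')) b)"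
    proof (cases "a = i")
      case True
      then show ?thesis using ab d ext_pair[OF ne nea[OF ab(2)], of k] unfolding p'_def p_def by simp
    next
      case False
      note F = False
      show ?thesis
      proof (cases "b = i")
        case True
        have "disentangled_pair p (pi a)" using d pair_sym nea ab True p_def by metis
        then have "disentangled_pair p' (pi a)" using ext_pair[OF ne nea[OF ab(1)], of k] p'_def by simp
        then show ?thesis using pair_sym[of p' "pi a"] nea[OF ab(1)] True F len by (cases p') auto
      next
        case False
        then show ?thesis using F d by simp
      qed
    qed
  qed
  then show ?thesis using path len tk p_def by blast
qed

end
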